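(* Let $d\ge2$, let $G$ be a closed germ, and let $s\in S_{\rm o}$. Then $s\in G$ if and only if the polar point $s^*$ lies on the boundary (relative to the hyperplane $H$) of the polar set $G^*$.
   Context: Fix an integer $d\ge 2$. $\langle\cdot,\cdot\rangle$ is the standard inner product on $\mathbb{R}^{d^2}$, $\|\cdot\|$ the Euclidean norm. $\Delta=\{p\in\mathbb{R}^{d^2}: p(i)\ge0,\ \sum_ip(i)=1\}$; $H=\{u\in\mathbb{R}^{d^2}:\sum_i u(i)=1\}$; $c=(1/d^2,\dots,1/d^2)$. For $A\subseteq H$ the polar is $A^*=\{u\in H:\langle u,v\rangle\ge\frac{1}{d(d+1)}\ \forall v\in A\}$. Radii: $r_{\rm o}^2=\frac{d-1}{d^2(d+1)}$, $r_{\rm i}^2=\frac{1}{d^2(d^2-1)}$. Out-sphere $S_{\rm o}=\{u\in H:\|u-c\|=r_{\rm o}\}$. For $s\in H$, $s\neq c$, the polar point of $s$ is $s^*=c-\frac{r_{\rm o}r_{\rm i}}{\|s-c\|^2}(s-c)$. A subset $A\subseteq\Delta$ is a germ if $\frac{1}{d(d+1)}\le\langle p,s\rangle\le\frac{2}{d(d+1)}$ for all $p,s\in A$. *)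

theory Defs
  imports "HOL-Analysis.Analysis"
begin

text \<open>Vectors of R^(d^2) are modelled as real^'n with CARD('n) = d^2.\<close>

definition prob_simplex :: "(real^'n) set" where
  "prob_simplex = {p. (\<forall>i. p $ i \<ge> 0) \<and> (\<Sum>i\<in>UNIV. p $ i) = 1}"

definition hyp :: "(real^'n) set" where
  "hyp = {u. (\<Sum>i\<in>UNIV. u $ i) = 1}"

definition centre :: "nat \<Rightarrow> real^'n" where
  "centre d = (\<chi> i. 1 / (real d)^2)"

definition polar :: "nat \<Rightarrow> (real^'n) set \<Rightarrow> (real^'n) set" where
  "polar d A = {u \<in> hyp. \<forall>v\<in>A. u \<bullet> v \<ge> 1 / (real d * (real d + 1))}"

definition r_out :: "nat \<Rightarrow> real" where
  "r_out d = sqrt ((real d - 1) / ((real d)^2 * (real d + 1)))"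

definition r_in :: "nat \<Rightarrow> real" where
  "r_in d = sqrt (1 / ((real d)^2 * ((real d)^2 - 1)))"

definition out_sphere :: "nat \<Rightarrow> (real^'n) set" where
  "out_sphere d = {u \<in> hyp. norm (u - centre d) = r_out d}"

definition polar_point :: "nat \<Rightarrow> real^'n \<Rightarrow> real^'n" where
  "polar_point d s = centre d - (r_out d * r_in d / (norm (s - centre d))^2) *\<^sub>R (s - centre d)"

definition germ :: "nat \<Rightarrow> (real^'n) set \<Rightarrow> bool" where
  "germ d A \<longleftrightarrow> A \<subseteq> prob_simplex \<and>
     (\<forall>p\<in>A. \<forall>s\<in>A. 1 / (real d * (real d + 1)) \<le> p \<bullet> s \<and> p \<bullet> s \<le> 2 / (real d * (real d + 1)))"

end

theory Submission imports Defs begin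

lemma hyp_comb: "a \<in> hyp \<Longrightarrow> b \<in> hyp \<Longrightarrow> a + t *\<^sub>R (a - b) \<in> hyp"
  by (simp add: hyp_def sum.distrib sum_subtractf sum_distrib_left[symmetric])

lemma centre_hyp: assumes "CARD('n) = d^2" "d \<ge> 1" shows "(centre d :: real^'n) \<in> hyp"
  using assms by (simp add: hyp_def centre_def)

lemma inner_centre: assumes "CARD('n) = d^2" "u \<in> hyp"
  shows "u \<bullet> (centre d :: real^'n) = 1 / (real d)^2"
proof -
  have "u \<bullet> (centre d :: real^'n) = (\<Sum>i\<in>UNIV. u $ i) * (1/(real d)^2)"
    by (simp add: inner_vec_def centre_def sum_divide_distrib)
  thus ?thesis using assms(2) by (simp add: hyp_def)
qed

lemma inner_shift: assumes "CARD('n) = d^2" "d \<ge> 1" "u \<in> hyp" "v \<in> hyp"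
  shows "u \<bullet> v = (u - centre d) \<bullet> (v - (centre d :: real^'n)) + 1 / (real d)^2"
proof -
  have c: "centre d \<in> (hyp :: (real^'n) set)" using centre_hyp assms by blast
  have "(u - centre d) \<bullet> (v - (centre d :: real^'n)) = u \<bullet> v - v \<bullet> centre d - u \<bullet> centre d + centre d \<bullet> (centre d :: real^'n)"
    by (simp add: inner_diff inner_commute)
  thus ?thesis using inner_centre[OF assms(1)] assms c by simp
qed

lemma radii: assumes "d \<ge> 2"
  shows "r_out d > 0" "r_in d > 0" "(r_out d)^2 = (real d - 1) / ((real d)^2 * (real d + 1))"
    "r_out d * r_in d = 1 / ((real d)^2 * (real d + 1))"
proof -
  have D: "real d \<ge> 2" using assms by simp
  have p1: "(real d - 1) / ((real d)^2 * (real d + 1)) > 0" using D by (intro divide_pos_pos) auto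
  have p2: "1 / ((real d)^2 * ((real d)^2 - 1)) > 0" proof -
    have "(real d)^2 \<ge> 4" using D power_mono[of 2 "real d" 2] by simp
    thus ?thesis using D by (intro divide_pos_pos mult_pos_pos) auto
  qed
  show "r_out d > 0" "r_in d > 0" using p1 p2 by (auto simp: r_out_def r_in_def)
  show "(r_out d)^2 = (real d - 1) / ((real d)^2 * (real d + 1))" using p1 by (simp add: r_out_def)
  have "r_out d * r_in d = sqrt ((real d - 1) / ((real d)^2 * (real d + 1)) * (1 / ((real d)^2 * ((real d)^2 - 1))))"
    unfolding r_out_def r_in_def by (rule real_sqrt_mult[symmetric])
  also have "(real d - 1) / ((real d)^2 * (real d + 1)) * (1 / ((real d)^2 * ((real d)^2 - 1))) = (1 / ((real d)^2 * (real d + 1)))^2"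
    proof -
    have e: "(real d)^2 - 1 = (real d - 1) * (real d + 1)" by (simp add: power2_eq_square algebra_simps)
    have "real d - 1 \<noteq> 0" "real d + 1 \<noteq> 0" "real d \<noteq> 0" using D by auto
    thus ?thesis unfolding e by (simp add: power2_eq_square)
  qed
  also have "sqrt \<dots> = 1 / ((real d)^2 * (real d + 1))" using D by simp
  finally show "r_out d * r_in d = 1 / ((real d)^2 * (real d + 1))" .
qed


lemma interior_char:
  fixes P :: "(real^'n) set"
  shows "x \<in> (top_of_set hyp) interior_of P \<longleftrightarrow> (\<exists>e>0. \<forall>u\<in>hyp. dist u x < e \<longrightarrow> u \<in> P) \<and> x \<in> hyp"
proof
  assume "x \<in> (top_of_set hyp) interior_of P"
  then obtain T where T: "openin (top_of_set hyp) T" "x \<in> T" "T \<subseteq> P" unfolding interior_of_def by blast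
  then show "(\<exists>e>0. \<forall>u\<in>hyp. dist u x < e \<longrightarrow> u \<in> P) \<and> x \<in> hyp"
    unfolding openin_euclidean_subtopology_iff by blast
next
  assume "(\<exists>e>0. \<forall>u\<in>hyp. dist u x < e \<longrightarrow> u \<in> P) \<and> x \<in> hyp"
  then obtain e where e: "e > 0" "\<forall>u\<in>hyp. dist u x < e \<longrightarrow> u \<in> P" "x \<in> hyp" by blast
  have "openin (top_of_set hyp) (hyp \<inter> ball x e)"
    unfolding openin_open by (intro exI[of _ "ball x e"]) auto
  moreover have "x \<in> hyp \<inter> ball x e" using e by auto
  moreover have "hyp \<inter> ball x e \<subseteq> P" using e by (auto simp: dist_commute)
  ultimately show "x \<in> (top_of_set hyp) interior_of P" unfolding interior_of_def by blast
qed

theorem mainTheorem7: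
  fixes d :: nat and G :: "(real^'n) set" and s :: "real^'n"
  assumes "d \<ge> 2" and "CARD('n) = d^2"
    and "germ d G" and "closed G"
    and "s \<in> out_sphere d"
  shows "s \<in> G \<longleftrightarrow> polar_point d s \<in> (top_of_set hyp) frontier_of (polar d G)"
proof -
  define D where "D = real d"
  define c :: "real^'n" where "c = centre d"
  define ro where "ro = r_out d"
  define ri where "ri = r_in d"
  define k where "k = 1 / (D * (D + 1))"
  define w where "w = s - c"
  define sp where "sp = polar_point d s"
  define P where "P = polar d G"
  have D2: "D \<ge> 2" using assms(1) by (simp add: D_def)
  have d1: "d \<ge> 1" using assms(1) by simp
  have ro0: "ro > 0" and ri0: "ri > 0" and ro2: "ro^2 = (D - 1) / (D^2 * (D + 1))"
    and rori: "ro * ri = 1 / (D^2 * (D + 1))"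
    using radii[OF assms(1)] by (auto simp: ro_def ri_def D_def)
  have Dn: "D \<noteq> 0" "D + 1 \<noteq> 0" using D2 by auto
  have kc: "k - 1 / D^2 = -(ro * ri)" unfolding rori k_def using Dn
    by (simp add: divide_simps power2_eq_square)
  have k2: "2 * k - 1 / D^2 = ro^2" unfolding ro2 k_def using Dn
    by (simp add: divide_simps power2_eq_square)
  have chyp: "c \<in> hyp" unfolding c_def using centre_hyp[OF assms(2) d1] .
  have shyp: "s \<in> hyp" and nw: "norm w = ro"
    using assms(5) by (auto simp: out_sphere_def w_def c_def ro_def)
  have Ghyp: "G \<subseteq> hyp" using assms(3) by (auto simp: germ_def prob_simplex_def hyp_def)
  have shift: "\<And>u v. u \<in> hyp \<Longrightarrow> v \<in> hyp \<Longrightarrow> u \<bullet> v = (u - c) \<bullet> (v - c) + 1 / D^2"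
    unfolding c_def D_def using inner_shift[OF assms(2) d1] by blast
  have spdef: "sp = c - (ri / ro) *\<^sub>R w"
    using nw ro0 by (simp add: sp_def polar_point_def c_def ro_def ri_def w_def power2_eq_square)
  have spc: "sp - c = - (ri / ro) *\<^sub>R w" using spdef by simp
  have sphyp: "sp \<in> hyp"
  proof -
    have "sp = c + (ri / ro) *\<^sub>R (c - s)" using spdef by (simp add: w_def algebra_simps)
    thus ?thesis using hyp_comb[OF chyp shyp] by simp
  qed
  have nspc: "norm (sp - c) = ri" using spc nw ro0 ri0 by simp
  have Pchar: "\<And>u. u \<in> P \<longleftrightarrow> u \<in> hyp \<and> (\<forall>v\<in>G. (u - c) \<bullet> (v - c) \<ge> -(ro * ri))"
  proof -
    fix u
    show "u \<in> P \<longleftrightarrow> u \<in> hyp \<and> (\<forall>v\<in>G. (u - c) \<bullet> (v - c) \<ge> -(ro * ri))"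
    proof (cases "u \<in> hyp")
      case True
      have "\<And>v. v \<in> G \<Longrightarrow> (u \<bullet> v \<ge> k) \<longleftrightarrow> ((u - c) \<bullet> (v - c) \<ge> -(ro * ri))"
        using shift[OF True] Ghyp kc by force
      thus ?thesis using True by (auto simp: P_def polar_def k_def D_def)
    qed (auto simp: P_def polar_def)
  qed
  have Gball: "\<And>v. v \<in> G \<Longrightarrow> norm (v - c) \<le> ro"
  proof -
    fix v assume v: "v \<in> G"
    have "v \<bullet> v \<le> 2 * k" using assms(3) v by (auto simp: germ_def k_def D_def)
    moreover have "v \<bullet> v = norm (v - c)^2 + 1 / D^2"
    proof -
      have vh: "v \<in> hyp" using Ghyp v by auto
      show ?thesis using shift[OF vh vh] unfolding power2_norm_eq_inner .
    qed
    ultimately have "norm (v - c)^2 \<le> ro^2" using k2 by linarith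
    thus "norm (v - c) \<le> ro" by (rule power2_le_imp_le) (use ro0 in linarith)
  qed
  have fle: "\<And>v. v \<in> G \<Longrightarrow> w \<bullet> (v - c) \<le> ro^2 \<and> (w \<bullet> (v - c) \<ge> ro^2 \<longrightarrow> v = s)"
  proof -
    fix v assume v: "v \<in> G"
    have e: "norm (w - (v - c))^2 = ro^2 - 2 * (w \<bullet> (v - c)) + norm (v - c)^2"
    proof -
      have "norm (w - (v - c))^2 = (w - (v - c)) \<bullet> (w - (v - c))" by (rule power2_norm_eq_inner)
      also have "\<dots> = w \<bullet> w - w \<bullet> (v - c) - (v - c) \<bullet> w + (v - c) \<bullet> (v - c)"
        by (simp only: inner_diff_left inner_diff_right)
      also have "(v - c) \<bullet> w = w \<bullet> (v - c)" by (rule inner_commute)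
      also have "w \<bullet> w = ro^2" using nw by (metis power2_norm_eq_inner)
      also have "(v - c) \<bullet> (v - c) = norm (v - c)^2" by (rule power2_norm_eq_inner[symmetric])
      finally show ?thesis by simp
    qed
    have n2: "norm (v - c)^2 \<le> ro^2" using Gball[OF v] by (simp add: power_mono)
    have "0 \<le> norm (w - (v - c))^2" by simp
    hence a: "w \<bullet> (v - c) \<le> ro^2" using e n2 by linarith
    have "w \<bullet> (v - c) \<ge> ro^2 \<Longrightarrow> v = s"
    proof -
      assume "w \<bullet> (v - c) \<ge> ro^2"
      hence "norm (w - (v - c))^2 \<le> 0" using e n2 by linarith
      hence "w - (v - c) = 0" by simp
      thus "v = s" by (simp add: w_def)
    qed
    thus "w \<bullet> (v - c) \<le> ro^2 \<and> (w \<bullet> (v - c) \<ge> ro^2 \<longrightarrow> v = s)" using a by blast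
  qed
  have spv: "\<And>v. (sp - c) \<bullet> (v - c) = -(ri / ro) * (w \<bullet> (v - c))" using spc by simp
  have spP: "sp \<in> P"
  proof -
    have "\<And>v. v \<in> G \<Longrightarrow> (sp - c) \<bullet> (v - c) \<ge> -(ro * ri)"
    proof -
      fix v assume v: "v \<in> G"
      have "(ri / ro) * (w \<bullet> (v - c)) \<le> (ri / ro) * ro^2"
        using fle[OF v] ri0 ro0 by (intro mult_left_mono) auto
      also have "(ri / ro) * ro^2 = ro * ri" using ro0 by (simp add: power2_eq_square)
      finally show "(sp - c) \<bullet> (v - c) \<ge> -(ro * ri)" using spv by simp
    qed
    thus ?thesis using Pchar sphyp by blast
  qed
  have PH: "P \<subseteq> hyp" using Pchar by blast
  have clos: "sp \<in> (top_of_set hyp) closure_of P"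
    using closure_of_subset[of P "top_of_set hyp"] PH spP by auto
  have front: "sp \<in> (top_of_set hyp) frontier_of P \<longleftrightarrow> \<not> (\<exists>e>0. \<forall>u\<in>hyp. dist u sp < e \<longrightarrow> u \<in> P)"
    using clos sphyp interior_char[of sp P] unfolding frontier_of_def by blast
  have "s \<in> G \<longleftrightarrow> \<not> (\<exists>e>0. \<forall>u\<in>hyp. dist u sp < e \<longrightarrow> u \<in> P)"
  proof
    assume sG: "s \<in> G"
    show "\<not> (\<exists>e>0. \<forall>u\<in>hyp. dist u sp < e \<longrightarrow> u \<in> P)"
    proof
      assume "\<exists>e>0. \<forall>u\<in>hyp. dist u sp < e \<longrightarrow> u \<in> P"
      then obtain e where e: "e > 0" "\<forall>u\<in>hyp. dist u sp < e \<longrightarrow> u \<in> P" by blast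
      define t where "t = e / (2 * ri)"
      have t0: "t > 0" using e ri0 by (simp add: t_def)
      define u where "u = sp + t *\<^sub>R (sp - c)"
      have uh: "u \<in> hyp" unfolding u_def using hyp_comb[OF sphyp chyp] .
      have "dist u sp = t * ri" using nspc t0 by (simp add: u_def dist_norm)
      also have "\<dots> < e" using e ri0 by (simp add: t_def)
      finally have "u \<in> P" using e uh by blast
      hence "(u - c) \<bullet> (s - c) \<ge> -(ro * ri)" using Pchar sG by blast
      moreover have "(u - c) \<bullet> (s - c) = -(1 + t) * (ro * ri)"
      proof -
        have "u - c = (1 + t) *\<^sub>R (sp - c)" by (simp add: u_def algebra_simps)
        hence "(u - c) \<bullet> (s - c) = (1 + t) * (-(ri / ro) * (w \<bullet> w))"
          using spv[of s] by (simp add: w_def)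
        also have "w \<bullet> w = ro^2" using nw by (metis power2_norm_eq_inner)
        finally show ?thesis using ro0 by (simp add: power2_eq_square algebra_simps)
      qed
      moreover have "ro * ri > 0" using ro0 ri0 by simp
      moreover have "t * (ro * ri) > 0" using t0 ro0 ri0 by simp
      moreover have "-(1 + t) * (ro * ri) = -(ro * ri) - t * (ro * ri)" by (simp add: algebra_simps)
      ultimately show False by linarith
    qed
  next
    assume nI: "\<not> (\<exists>e>0. \<forall>u\<in>hyp. dist u sp < e \<longrightarrow> u \<in> P)"
    show "s \<in> G"
    proof (rule ccontr)
      assume sG: "s \<notin> G"
      show False
      proof (cases "G = {}")
        case True
        hence "P = hyp" by (simp add: P_def polar_def)
        hence "\<exists>e>0. \<forall>u\<in>hyp. dist u sp < e \<longrightarrow> u \<in> P" by (intro exI[of _ 1]) auto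
        thus False using nI by blast
      next
        case False
        have "bounded G" using Gball by (intro bounded_subset[OF bounded_cball[of c ro]]) (auto simp: dist_norm norm_minus_commute)
        hence cG: "compact G" using assms(4) by (simp add: compact_eq_bounded_closed)
        have "compact ((\<lambda>v. w \<bullet> (v - c)) ` G)"
          by (intro compact_continuous_image cG continuous_intros)
        then obtain M where M: "M \<in> (\<lambda>v. w \<bullet> (v - c)) ` G" "\<forall>y\<in>(\<lambda>v. w \<bullet> (v - c)) ` G. y \<le> M"
          using compact_attains_sup[of "(\<lambda>v. w \<bullet> (v - c)) ` G"] False by blast
        then obtain v0 where v0: "v0 \<in> G" "M = w \<bullet> (v0 - c)" by blast
        have Mlt: "M < ro^2" using fle[OF v0(1)] v0 sG by force
        have Mv: "\<And>v. v \<in> G \<Longrightarrow> w \<bullet> (v - c) \<le> M" using M by blast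
        define e where "e = ri * (ro^2 - M) / ro^2"
        have e0: "e > 0" using ri0 ro0 Mlt by (simp add: e_def)
        have "\<forall>u\<in>hyp. dist u sp < e \<longrightarrow> u \<in> P"
        proof (intro ballI impI)
          fix u assume uh: "u \<in> hyp" and du: "dist u sp < e"
          have "\<forall>v\<in>G. (u - c) \<bullet> (v - c) \<ge> -(ro * ri)"
          proof
            fix v assume v: "v \<in> G"
            have sum: "(u - c) \<bullet> (v - c) = (sp - c) \<bullet> (v - c) + (u - sp) \<bullet> (v - c)"
              by (simp add: inner_diff_left)
            have a1: "(sp - c) \<bullet> (v - c) \<ge> -(ri / ro) * M"
            proof -
              have "(ri / ro) * (w \<bullet> (v - c)) \<le> (ri / ro) * M"
                using Mv[OF v] ri0 ro0 by (intro mult_left_mono) auto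
              thus ?thesis using spv[of v] by linarith
            qed
            have "\<bar>(u - sp) \<bullet> (v - c)\<bar> \<le> norm (u - sp) * norm (v - c)"
              by (rule Cauchy_Schwarz_ineq2)
            also have "\<dots> \<le> e * ro"
              using du Gball[OF v] e0 by (intro mult_mono) (auto simp: dist_norm)
            finally have a2: "(u - sp) \<bullet> (v - c) \<ge> - (e * ro)" by linarith
            have "-(ri / ro) * M - e * ro = -(ro * ri)"
              using ro0 by (simp add: e_def field_simps power2_eq_square)
            thus "(u - c) \<bullet> (v - c) \<ge> -(ro * ri)" using sum a1 a2 by linarith
          qed
          thus "u \<in> P" using Pchar uh by blast
        qed
        thus False using nI e0 by blast
      qed
    qed
  qed
  thus ?thesis using front by (simp add: sp_def P_def)
qed

end
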